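(* Fix $\varepsilon>0$, $\delta>0$ and a positive integer $t$. For a database $D$ (a finite multiset of points in $\mathbb{R}^d$), define $M(D)$ to be the largest $k\in\{0,1,\dots,t-1\}$ for which there exists a positive integer $g$ with $$\frac{V_{t-k-1,D}}{V_{t+k+g+1,D}}\cdot e^{-\varepsilon g/2}\le\delta,$$ where this inequality is understood to hold only when $V_{t-k-1,D}<\infty$ and $V_{t+k+g+1,D}>0$; if no such $k$ exists, $M(D)=-1$. Then: (1) $M$ has sensitivity 1: for all neighboring databases $D\sim D'$, $|M(D)-M(D')|\le 1$. (2) Assume that for every database $z$ under consideration the set $\{y:\tilde T_z(y)\ge t\}$ has positive Lebesgue measure (so that $A_t(z)$ below is well defined). Then for every database $z\in\mathrm{Unsafe}(\varepsilon,4e^{\varepsilon}\delta,t)$ we have $d_H(D,z)>M(D)$.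
   Context: Databases are finite multisets of points in $\mathbb{R}^d$; $D\sim D'$ (neighbors) means one is obtained from the other by adding or removing a single point. $d_H(D,z)$ is the minimum number of single-point additions/removals needed to transform $D$ into $z$. For $y\in\mathbb{R}^d$ and $j\in[d]$, $T_{D,j}(y)=\min\big(|\{x\in D: x_j\le y_j\}|,|\{x\in D: x_j\ge y_j\}|\big)$ (with multiplicity), and the approximate Tukey depth is $\tilde T_D(y)=\min_{j\in[d]}T_{D,j}(y)$. For an integer $p$, $V_{p,D}$ is the Lebesgue measure of $\{y:\tilde T_D(y)\ge p\}$ (so $V_{p,D}=+\infty$ for $p\le 0$). Two distributions $P,Q$ on $\mathbb{R}^d$ are $(\varepsilon,\delta)$-indistinguishable if for every measurable $W$, $P(W)\le e^{\varepsilon}Q(W)+\delta$ and $Q(W)\le e^{\varepsilon}P(W)+\delta$. For a database $z$, $A_t(z)$ is the restricted exponential mechanism: the distribution on $\mathbb{R}^d$ with density proportional to $\exp(\varepsilon\,\tilde T_z(y)/2)\cdot\mathbf{1}[\tilde T_z(y)\ge t]$. A database $z$ is $(\varepsilon,\delta,t)$-safe if $A_t(z)$ and $A_t(z')$ are $(\varepsilon,\delta)$-indistinguishable for every neighbor $z'\sim z$; $\mathrm{Unsafe}(\varepsilon,\delta,t)$ is the set of databases that are not $(\varepsilon,\delta,t)$-safe. *)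

theory Defs
  imports "HOL-Analysis.Analysis" "HOL-Library.Multiset"
begin

type_synonym 'n db = "(real ^ 'n) multiset"

definition nbr :: "'n::finite db \<Rightarrow> 'n db \<Rightarrow> bool" where
  "nbr D D' \<longleftrightarrow> (\<exists>x. D' = add_mset x D) \<or> (\<exists>x. D = add_mset x D')"

definition dH :: "'n::finite db \<Rightarrow> 'n db \<Rightarrow> nat" where
  "dH D z = (LEAST n. (nbr ^^ n) D z)"

definition Tj :: "'n::finite db \<Rightarrow> 'n \<Rightarrow> real ^ 'n \<Rightarrow> nat" where
  "Tj D j y = min (size (filter_mset (\<lambda>x. x $ j \<le> y $ j) D))
                  (size (filter_mset (\<lambda>x. x $ j \<ge> y $ j) D))"

definition tukey :: "'n::finite db \<Rightarrow> real ^ 'n \<Rightarrow> nat" where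
  "tukey D y = Min (range (\<lambda>j. Tj D j y))"

text \<open>V_{p,D}: Lebesgue measure of the depth-p region (= \<infinity> for p \<le> 0).\<close>
definition Vol :: "int \<Rightarrow> 'n::finite db \<Rightarrow> ennreal" where
  "Vol p D = emeasure lebesgue {y. p \<le> int (tukey D y)}"

definition Mcond :: "real \<Rightarrow> real \<Rightarrow> nat \<Rightarrow> 'n::finite db \<Rightarrow> nat \<Rightarrow> bool" where
  "Mcond eps delta t D k \<longleftrightarrow> (\<exists>g::nat. g > 0 \<and>
      Vol (int t - int k - 1) D < \<infinity> \<and>
      Vol (int t + int k + int g + 1) D > 0 \<and>
      enn2real (Vol (int t - int k - 1) D) / enn2real (Vol (int t + int k + int g + 1) D)
        * exp (- eps * real g / 2) \<le> delta)"

definition Mfun :: "real \<Rightarrow> real \<Rightarrow> nat \<Rightarrow> 'n::finite db \<Rightarrow> int" where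
  "Mfun eps delta t D =
     (if \<exists>k<t. Mcond eps delta t D k then int (GREATEST k. k < t \<and> Mcond eps delta t D k) else -1)"

definition mechf :: "real \<Rightarrow> nat \<Rightarrow> 'n::finite db \<Rightarrow> real ^ 'n \<Rightarrow> ennreal" where
  "mechf eps t z y = ennreal (exp (eps * real (tukey z y) / 2)) * indicator {y. t \<le> tukey z y} y"

definition mechA :: "real \<Rightarrow> nat \<Rightarrow> 'n::finite db \<Rightarrow> (real ^ 'n) measure" where
  "mechA eps t z = density lebesgue
     (\<lambda>y. mechf eps t z y / (\<integral>\<^sup>+ u. mechf eps t z u \<partial>lebesgue))"

definition indist :: "real \<Rightarrow> real \<Rightarrow> 'a measure \<Rightarrow> 'a measure \<Rightarrow> bool" where
  "indist eps delta P Q \<longleftrightarrow> sets P = sets Q \<and> (\<forall>W \<in> sets P.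
      measure P W \<le> exp eps * measure Q W + delta \<and>
      measure Q W \<le> exp eps * measure P W + delta)"

definition safe :: "real \<Rightarrow> real \<Rightarrow> nat \<Rightarrow> 'n::finite db \<Rightarrow> bool" where
  "safe eps delta t z \<longleftrightarrow> (\<forall>z'. nbr z z' \<longrightarrow> indist eps delta (mechA eps t z) (mechA eps t z'))"

definition Unsafe :: "real \<Rightarrow> real \<Rightarrow> nat \<Rightarrow> 'n::finite db set" where
  "Unsafe eps delta t = {z. \<not> safe eps delta t z}"

end

theory Submission
  imports Defs
begin

lemma tukey_ge_iff: "m \<le> tukey D y \<longleftrightarrow> (\<forall>j. m \<le> Tj D j y)"
  unfolding tukey_def by (subst Min_ge_iff) auto

lemma tukey_le_Tj: "tukey D y \<le> Tj D j y"
  unfolding tukey_def by (rule Min_le) auto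

lemma tukey_eq_Tj: "\<exists>j. tukey D y = Tj D j y"
proof -
  have "tukey D y \<in> range (\<lambda>j. Tj D j y)" unfolding tukey_def by (rule Min_in) auto
  thus ?thesis by auto
qed

lemma tukey_le_size: "tukey D y \<le> size D"
proof -
  obtain j where "tukey D y = Tj D j y" using tukey_eq_Tj by blast
  moreover have "Tj D j y \<le> size D" unfolding Tj_def
    using size_filter_mset_lesseq[of _ D] by (simp add: min.coboundedI1)
  ultimately show ?thesis by simp
qed

lemma Tj_add: "Tj D j y \<le> Tj (add_mset x D) j y \<and> Tj (add_mset x D) j y \<le> Tj D j y + 1"
  unfolding Tj_def by auto

lemma tukey_add: "tukey D y \<le> tukey (add_mset x D) y \<and> tukey (add_mset x D) y \<le> tukey D y + 1"
proof
  show "tukey D y \<le> tukey (add_mset x D) y"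
    unfolding tukey_ge_iff
  proof
    fix j show "tukey D y \<le> Tj (add_mset x D) j y"
      using tukey_le_Tj[of D y j] Tj_add[of D j y x] by linarith
  qed
  obtain j where "tukey D y = Tj D j y" using tukey_eq_Tj by blast
  then show "tukey (add_mset x D) y \<le> tukey D y + 1"
    using tukey_le_Tj[of "add_mset x D" y j] Tj_add[of D j y x] by simp
qed

definition close :: "nat \<Rightarrow> 'n::finite db \<Rightarrow> 'n db \<Rightarrow> bool" where
  "close n A B \<longleftrightarrow> (\<forall>y. tukey A y \<le> tukey B y + n \<and> tukey B y \<le> tukey A y + n)"

lemma close_sym: "close n A B \<Longrightarrow> close n B A"
  unfolding close_def by auto

lemma close_trans: "close m A B \<Longrightarrow> close n B C \<Longrightarrow> close (m+n) A C"
  unfolding close_def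
proof (intro allI conjI)
  fix y
  assume a: "\<forall>y. tukey A y \<le> tukey B y + m \<and> tukey B y \<le> tukey A y + m"
    and b: "\<forall>y. tukey B y \<le> tukey C y + n \<and> tukey C y \<le> tukey B y + n"
  from a[rule_format, of y] b[rule_format, of y]
  show "tukey A y \<le> tukey C y + (m + n)" "tukey C y \<le> tukey A y + (m + n)" by linarith+
qed 

lemma close_mono: "close m A B \<Longrightarrow> m \<le> n \<Longrightarrow> close n A B"
  unfolding close_def by (meson add_left_mono le_trans)

lemma nbr_close: "nbr A B \<Longrightarrow> close 1 A B"
proof -
  assume "nbr A B"
  then consider x where "B = add_mset x A" | x where "A = add_mset x B" unfolding nbr_def by blast
  then show ?thesis
  proof cases
    case 1 then show ?thesis unfolding close_def using tukey_add[of A _ x] by (auto intro: le_SucI)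
  next
    case 2 then show ?thesis unfolding close_def using tukey_add[of B _ x] by (auto intro: le_SucI)
  qed
qed

lemma chain_close: "(nbr ^^ n) A B \<Longrightarrow> close n A B"
proof (induction n arbitrary: B)
  case 0
  then show ?case by (auto elim: relpowp_0_E simp: close_def)
next
  case (Suc n)
  from Suc.prems obtain C where "(nbr ^^ n) A C" "nbr C B" by (rule relpowp_Suc_E)
  then show ?case using close_trans[OF Suc.IH nbr_close, of C B] by simp
qed

lemma chain_empty1: "(nbr ^^ size D) D {#}"
proof (induction D)
  case empty then show ?case by simp
next
  case (add x D)
  have "nbr (add_mset x D) D" unfolding nbr_def by auto
  then show ?case using add relpowp_Suc_I2 by (metis size_add_mset)
qed

lemma chain_empty2: "(nbr ^^ size D) {#} D"
proof (induction D)
  case empty then show ?case by simp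
next
  case (add x D)
  have "nbr D (add_mset x D)" unfolding nbr_def by auto
  then show ?case using add relpowp_Suc_I by (metis size_add_mset)
qed

lemma dH_chain: "(nbr ^^ dH D z) D z"
proof -
  have "(nbr ^^ (size D + size z)) D z"
    unfolding relpowp_add using chain_empty1 chain_empty2 by blast
  then show ?thesis unfolding dH_def by (rule LeastI)
qed

lemma dH_close: "close (dH D z) D z"
  using chain_close dH_chain by blast


lemma cnt_le_meas: "(\<lambda>y::real^'n::finite. real (size (filter_mset (\<lambda>x. x$j \<le> y$j) D))) \<in> borel_measurable borel"
proof (induction D)
  case empty then show ?case by simp
next
  case (add x D)
  have e: "(\<lambda>y::real^'n. real (size (filter_mset (\<lambda>x. x$j \<le> y$j) (add_mset x D)))) =
     (\<lambda>y. real (size (filter_mset (\<lambda>x. x$j \<le> y$j) D)) + (if x$j \<le> y$j then 1 else 0))"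
    by (auto simp: fun_eq_iff)
  show ?case unfolding e using add by measurable
qed

lemma cnt_ge_meas: "(\<lambda>y::real^'n::finite. real (size (filter_mset (\<lambda>x. x$j \<ge> y$j) D))) \<in> borel_measurable borel"
proof (induction D)
  case empty then show ?case by simp
next
  case (add x D)
  have e: "(\<lambda>y::real^'n. real (size (filter_mset (\<lambda>x. x$j \<ge> y$j) (add_mset x D)))) =
     (\<lambda>y. real (size (filter_mset (\<lambda>x. x$j \<ge> y$j) D)) + (if x$j \<ge> y$j then 1 else 0))"
    by (auto simp: fun_eq_iff)
  show ?case unfolding e using add by measurable
qed

lemma Tj_ge_sets: "{y::real^'n::finite. m \<le> Tj D j y} \<in> sets borel"
proof -
  have "{y::real^'n. m \<le> Tj D j y} =
     {y. real m \<le> real (size (filter_mset (\<lambda>x. x$j \<le> y$j) D))} \<inter>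
     {y. real m \<le> real (size (filter_mset (\<lambda>x. x$j \<ge> y$j) D))}"
    unfolding Tj_def by auto
  also have "\<dots> \<in> sets borel"
    using cnt_le_meas[of j D] cnt_ge_meas[of j D] by measurable
  finally show ?thesis .
qed

lemma tukey_ge_sets: "{y::real^'n::finite. m \<le> tukey D y} \<in> sets borel"
proof -
  have "{y::real^'n. m \<le> tukey D y} = (\<Inter>j. {y. m \<le> Tj D j y})"
    unfolding tukey_ge_iff by auto
  also have "\<dots> \<in> sets borel"
    using Tj_ge_sets by (intro sets.finite_INT) auto
  finally show ?thesis .
qed

lemma tukey_meas_borel: "tukey D \<in> borel \<rightarrow>\<^sub>M count_space (UNIV::nat set)"
proof (subst measurable_count_space_eq2_countable, intro conjI ballI)
  fix a :: nat
  have "tukey D -` {a} \<inter> space borel = {y. a \<le> tukey D y} - {y. Suc a \<le> tukey D y}"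
    by auto
  then show "tukey D -` {a} \<inter> space borel \<in> sets borel"
    using tukey_ge_sets by (metis sets.Diff)
qed auto

lemma tukey_meas: "tukey D \<in> lebesgue \<rightarrow>\<^sub>M count_space (UNIV::nat set)"
  using tukey_meas_borel by (intro measurable_completion) simp

lemma tukey_sets: "{y::real^'n::finite. P (tukey D y)} \<in> sets lebesgue"
proof -
  have "{y::real^'n. P (tukey D y)} = tukey D -` {n. P n} \<inter> space lebesgue" by auto
  then show ?thesis using measurable_sets[OF tukey_meas, of "{n. P n}" D] by simp
qed

lemma tukey_sets2: "{y::real^'n::finite. P (tukey D y) \<and> Q (tukey D' y)} \<in> sets lebesgue"
proof -
  have "{y::real^'n. P (tukey D y) \<and> Q (tukey D' y)} = {y. P (tukey D y)} \<inter> {y. Q (tukey D' y)}" by auto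
  then show ?thesis using tukey_sets by (metis sets.Int)
qed

lemma mechf_meas: "mechf eps t z \<in> borel_measurable lebesgue"
proof -
  have "mechf eps t z = (\<lambda>n. ennreal (exp (eps * real n / 2)) * (if t \<le> n then 1 else 0)) \<circ> tukey z"
    by (auto simp: fun_eq_iff mechf_def indicator_def)
  also have "\<dots> \<in> borel_measurable lebesgue"
    by (rule measurable_comp[OF tukey_meas]) simp
  finally show ?thesis .
qed

lemma Vol_close: "close c A B \<Longrightarrow> Vol p A \<le> Vol (p - int c) B"
  unfolding Vol_def close_def
proof (rule emeasure_mono)
  assume a: "\<forall>y. tukey A y \<le> tukey B y + c \<and> tukey B y \<le> tukey A y + c"
  show "{y. p \<le> int (tukey A y)} \<subseteq> {y. p - int c \<le> int (tukey B y)}"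
  proof
    fix y assume "y \<in> {y. p \<le> int (tukey A y)}"
    with a[rule_format, of y] show "y \<in> {y. p - int c \<le> int (tukey B y)}" by auto
  qed
  show "{y. p - int c \<le> int (tukey B y)} \<in> sets lebesgue" by (rule tukey_sets)
qed

lemma Vol_mono: "q \<le> p \<Longrightarrow> Vol p D \<le> Vol q D"
  unfolding Vol_def
  by (rule emeasure_mono) (auto intro: tukey_sets)


lemma Mcond_shift:
  assumes cl: "close 1 D D'" and M: "Mcond eps delta t D k" and k: "1 \<le> k" and d: "delta > 0"
  shows "Mcond eps delta t D' (k - 1)"
proof -
  from M obtain g :: nat where g: "g > 0" and A: "Vol (int t - int k - 1) D < \<infinity>"
    and B: "Vol (int t + int k + int g + 1) D > 0"
    and R: "enn2real (Vol (int t - int k - 1) D) / enn2real (Vol (int t + int k + int g + 1) D)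
        * exp (- eps * real g / 2) \<le> delta"
    unfolding Mcond_def by blast
  have e1: "int t - int (k - 1) - 1 = int t - int k" using k by simp
  have e2: "int t + int (k - 1) + int g + 1 = (int t + int k + int g + 1) - 1" using k by simp
  define a where "a = Vol (int t - int k - 1) D"
  define b where "b = Vol (int t + int k + int g + 1) D"
  define a' where "a' = Vol (int t - int (k - 1) - 1) D'"
  define b' where "b' = Vol (int t + int (k - 1) + int g + 1) D'"
  have aa: "a' \<le> a" unfolding a'_def a_def e1
    using Vol_close[OF close_sym[OF cl], of "int t - int k"] by simp
  have bb: "b \<le> b'" unfolding b'_def b_def e2
    using Vol_close[OF cl, of "int t + int k + int g + 1"] by simp
  have A': "a' < \<infinity>" using aa A a_def by auto
  have B': "b' > 0" using bb B b_def by auto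
  have R': "enn2real a' / enn2real b' * exp (- eps * real g / 2) \<le> delta"
  proof (cases "b' = \<infinity>")
    case True then show ?thesis using d by simp
  next
    case False
    then have bt: "b' < top" by (simp add: top.not_eq_extremum)
    have "b < top" using bb bt by auto
    then have bpos: "enn2real b > 0" using B b_def
      by (simp add: enn2real_positive_iff)
    have "enn2real b \<le> enn2real b'" using bb bt by (rule enn2real_mono)
    moreover have "enn2real a' \<le> enn2real a" using aa A a_def by (intro enn2real_mono) auto
    ultimately have "enn2real a' / enn2real b' \<le> enn2real a / enn2real b"
      using bpos by (intro frac_le) auto
    then have "enn2real a' / enn2real b' * exp (- eps * real g / 2)
        \<le> enn2real a / enn2real b * exp (- eps * real g / 2)"
      by (intro mult_right_mono) auto
    then show ?thesis using R a_def b_def by simp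
  qed
  show ?thesis unfolding Mcond_def
    using g A' B' R' a'_def b'_def by blast
qed

lemma Mfun_ge: "Mfun eps delta t D \<ge> -1"
  unfolding Mfun_def by auto

lemma Mfun_pos:
  assumes "Mfun eps delta t D \<ge> 0"
  shows "Mcond eps delta t D (nat (Mfun eps delta t D)) \<and> nat (Mfun eps delta t D) < t"
proof -
  have ex: "\<exists>k<t. Mcond eps delta t D k" using assms unfolding Mfun_def by (auto split: if_splits)
  then obtain k where "k < t \<and> Mcond eps delta t D k" by blast
  then have "(\<lambda>k. k < t \<and> Mcond eps delta t D k) (GREATEST k. k < t \<and> Mcond eps delta t D k)"
    by (rule GreatestI_nat[where b = t]) auto
  then show ?thesis using ex unfolding Mfun_def by simp
qed

lemma Mfun_lower:
  assumes cl: "close 1 D D'" and d: "delta > 0"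
  shows "Mfun eps delta t D - 1 \<le> Mfun eps delta t D'"
proof (cases "Mfun eps delta t D \<ge> 1")
  case False then show ?thesis using Mfun_ge[of eps delta t D'] by simp
next
  case True
  define k where "k = nat (Mfun eps delta t D)"
  have kk: "Mcond eps delta t D k" "k < t" using Mfun_pos[of eps delta t D] True k_def by auto
  have k1: "1 \<le> k" using True k_def by simp
  have M': "Mcond eps delta t D' (k - 1)" by (rule Mcond_shift[OF cl kk(1) k1 d])
  have ex: "\<exists>k'<t. Mcond eps delta t D' k'" using M' kk(2) by (intro exI[of _ "k-1"]) auto
  have "k - 1 \<le> (GREATEST k. k < t \<and> Mcond eps delta t D' k)"
    using M' kk(2) by (intro Greatest_le_nat[where b = t]) auto
  then have "int (k - 1) \<le> Mfun eps delta t D'" using ex unfolding Mfun_def by simp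
  then show ?thesis using k1 k_def True by simp
qed

lemma part1:
  assumes "delta > 0"
  shows "\<forall>D D' :: 'n::finite db. nbr D D' \<longrightarrow>
            \<bar>Mfun eps delta t D - Mfun eps delta t D'\<bar> \<le> 1"
proof (intro allI impI)
  fix D D' :: "'n db" assume "nbr D D'"
  then have c: "close 1 D D'" by (rule nbr_close)
  show "\<bar>Mfun eps delta t D - Mfun eps delta t D'\<bar> \<le> 1"
    using Mfun_lower[OF c assms, of eps t] Mfun_lower[OF close_sym[OF c] assms, of eps t] by simp
qed


declare mechf_meas[measurable]

lemma E_sets[measurable]: "{y. t \<le> tukey z1 y \<and> tukey z2 y < t} \<in> sets lebesgue"
  by (rule tukey_sets2)

lemma mechf_simp: "mechf eps t z y = (if t \<le> tukey z y then ennreal (exp (eps * real (tukey z y) / 2)) else 0)"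
  unfolding mechf_def by (auto simp: indicator_def)

lemma ptw:
  assumes cl: "close 1 z1 z2" and eps: "eps \<ge> 0"
  shows "mechf eps t z1 y \<le> ennreal (exp (eps/2)) * mechf eps t z2 y
     + ennreal (exp (eps * real t / 2)) * indicator {y. t \<le> tukey z1 y \<and> tukey z2 y < t} y"
proof -
  have c1: "tukey z1 y \<le> tukey z2 y + 1" using cl unfolding close_def by auto
  consider "tukey z1 y < t" | "t \<le> tukey z1 y" "t \<le> tukey z2 y" | "t \<le> tukey z1 y" "tukey z2 y < t"
    by linarith
  then show ?thesis
  proof cases
    case 1 then show ?thesis by (simp add: mechf_simp)
  next
    case 2
    have "exp (eps * real (tukey z1 y) / 2) \<le> exp (eps * real (tukey z2 y + 1) / 2)"
      using c1 eps by (auto intro!: mult_left_mono)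
    also have "\<dots> = exp (eps/2) * exp (eps * real (tukey z2 y) / 2)"
      by (simp add: exp_add[symmetric] algebra_simps add_divide_distrib)
    finally have "ennreal (exp (eps * real (tukey z1 y) / 2)) \<le> ennreal (exp (eps/2)) * ennreal (exp (eps * real (tukey z2 y) / 2))"
      by (simp add: ennreal_mult[symmetric])
    then show ?thesis using 2 by (simp add: mechf_simp add_increasing2)
  next
    case 3
    then have "tukey z1 y = t" using c1 by linarith
    then show ?thesis using 3 by (simp add: mechf_simp)
  qed
qed

lemma intW:
  assumes cl: "close 1 z1 z2" and eps: "eps \<ge> 0" and W: "W \<in> sets lebesgue"
  shows "(\<integral>\<^sup>+y. mechf eps t z1 y * indicator W y \<partial>lebesgue) \<le>
     ennreal (exp (eps/2)) * (\<integral>\<^sup>+y. mechf eps t z2 y * indicator W y \<partial>lebesgue)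
     + ennreal (exp (eps * real t / 2)) * emeasure lebesgue {y. t \<le> tukey z1 y \<and> tukey z2 y < t}"
proof -
  define E where "E = {y. t \<le> tukey z1 y \<and> tukey z2 y < t}"
  have [measurable]: "E \<in> sets lebesgue" unfolding E_def by (rule tukey_sets2)
  have "(\<integral>\<^sup>+y. mechf eps t z1 y * indicator W y \<partial>lebesgue) \<le>
      (\<integral>\<^sup>+y. ennreal (exp (eps/2)) * (mechf eps t z2 y * indicator W y)
          + ennreal (exp (eps * real t / 2)) * indicator E y \<partial>lebesgue)"
  proof (rule nn_integral_mono)
    fix y
    show "mechf eps t z1 y * indicator W y \<le> ennreal (exp (eps/2)) * (mechf eps t z2 y * indicator W y)
          + ennreal (exp (eps * real t / 2)) * indicator E y"
      using ptw[OF cl eps, of t y] unfolding E_def[symmetric]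
      by (cases "y \<in> W") (auto simp: add_increasing)
  qed
  also have "\<dots> = ennreal (exp (eps/2)) * (\<integral>\<^sup>+y. mechf eps t z2 y * indicator W y \<partial>lebesgue)
     + ennreal (exp (eps * real t / 2)) * emeasure lebesgue E"
    using W by (simp add: nn_integral_add nn_integral_cmult nn_integral_cmult_indicator)
  finally show ?thesis unfolding E_def .
qed

lemma intW_le: "(\<integral>\<^sup>+y. mechf eps t z y * indicator W y \<partial>lebesgue) \<le> (\<integral>\<^sup>+y. mechf eps t z y \<partial>lebesgue)"
  by (rule nn_integral_mono) (auto simp: indicator_def)

lemma measure_mechA:
  assumes W: "W \<in> sets lebesgue" and Zf: "(\<integral>\<^sup>+y. mechf eps t z y \<partial>lebesgue) < \<infinity>"
    and Zp: "(\<integral>\<^sup>+y. mechf eps t z y \<partial>lebesgue) > 0"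
  shows "measure (mechA eps t z) W =
    enn2real (\<integral>\<^sup>+y. mechf eps t z y * indicator W y \<partial>lebesgue) / enn2real (\<integral>\<^sup>+y. mechf eps t z y \<partial>lebesgue)"
proof -
  define Z where "Z = (\<integral>\<^sup>+y. mechf eps t z y \<partial>lebesgue)"
  define I where "I = (\<integral>\<^sup>+y. mechf eps t z y * indicator W y \<partial>lebesgue)"
  have IZ: "I \<le> Z" unfolding I_def Z_def by (rule intW_le)
  have "emeasure (mechA eps t z) W = (\<integral>\<^sup>+y. mechf eps t z y / Z * indicator W y \<partial>lebesgue)"
    unfolding mechA_def Z_def using W by (subst emeasure_density) auto
  also have "\<dots> = (\<integral>\<^sup>+y. (mechf eps t z y * indicator W y) * inverse Z \<partial>lebesgue)"
    by (simp add: divide_ennreal_def ac_simps)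
  also have "\<dots> = I * inverse Z" unfolding I_def using W by (subst nn_integral_multc) auto
  also have "\<dots> = I / Z" by (simp add: divide_ennreal_def)
  finally have em: "emeasure (mechA eps t z) W = I / Z" .
  have Zt: "Z < top" using Zf Z_def by simp
  have It: "I < top" using IZ Zt by auto
  have Zr: "enn2real Z > 0" using Zt Zp Z_def by (simp add: enn2real_positive_iff)
  have "I / Z = ennreal (enn2real I) / ennreal (enn2real Z)" using It Zt by simp
  also have "\<dots> = ennreal (enn2real I / enn2real Z)" using Zr by (intro divide_ennreal) auto
  finally show ?thesis unfolding measure_def em I_def[symmetric] Z_def[symmetric] by simp
qed


lemma real_key:
  fixes i1 i2 Z1 Z2 e b1 b2 :: real
  assumes h1: "i1 \<le> e*i2 + b1" and h2: "Z2 \<le> e*Z1 + b2" and "0 \<le> i2" "i2 \<le> Z2"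
    and "Z1 > 0" "Z2 > 0" "e > 0" "b2 \<ge> 0"
  shows "i1/Z1 \<le> e*e*(i2/Z2) + (e*b2 + b1)/Z1"
proof -
  have "i2*Z2 \<le> i2*(e*Z1 + b2)" using assms by (intro mult_left_mono) auto
  also have "\<dots> = e*i2*Z1 + b2*i2" by (simp add: algebra_simps)
  also have "\<dots> \<le> e*i2*Z1 + b2*Z2" using assms by (intro add_left_mono mult_left_mono) auto
  finally have "i2*Z2 \<le> e*i2*Z1 + b2*Z2" .
  then have "i2 \<le> e*i2*Z1/Z2 + b2" using assms by (simp add: field_simps)
  then have "e*i2 \<le> e*(e*i2*Z1/Z2 + b2)" using assms by (intro mult_left_mono) auto
  then have "i1 \<le> e*e*i2*Z1/Z2 + e*b2 + b1" using h1 by (simp add: algebra_simps)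
  then have "i1/Z1 \<le> (e*e*i2*Z1/Z2 + e*b2 + b1)/Z1" using assms by (intro divide_right_mono) auto
  also have "\<dots> = e*e*(i2/Z2) + (e*b2 + b1)/Z1" using assms by (simp add: field_simps)
  finally show ?thesis .
qed

lemma ennreal_ineq:
  assumes X: "X \<le> ennreal a * Y + ennreal b * V" and "Y < top" "V < top" "a \<ge> 0" "b \<ge> 0"
  shows "enn2real X \<le> a * enn2real Y + b * enn2real V"
proof -
  have "ennreal a * Y + ennreal b * V = ennreal (a * enn2real Y + b * enn2real V)"
    using assms by (simp add: ennreal_mult ennreal_plus)
  then have X': "X \<le> ennreal (a * enn2real Y + b * enn2real V)" using X by simp
  then have "X < top" by (metis ennreal_less_top le_less_trans)
  then have "ennreal (enn2real X) \<le> ennreal (a * enn2real Y + b * enn2real V)" using X' by simp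
  then show ?thesis using assms by (subst (asm) ennreal_le_iff) auto
qed

lemma half:
  fixes z1 z2 :: "'n::finite db"
  assumes cl: "close 1 z1 z2" and eps: "eps \<ge> 0" and W: "W \<in> sets lebesgue"
    and Z1f: "(\<integral>\<^sup>+y. mechf eps t z1 y \<partial>lebesgue) < \<infinity>"
    and Z1p: "(\<integral>\<^sup>+y. mechf eps t z1 y \<partial>lebesgue) > 0"
    and Z2f: "(\<integral>\<^sup>+y. mechf eps t z2 y \<partial>lebesgue) < \<infinity>"
    and Z2p: "(\<integral>\<^sup>+y. mechf eps t z2 y \<partial>lebesgue) > 0"
    and E1f: "emeasure lebesgue {y. t \<le> tukey z1 y \<and> tukey z2 y < t} < \<infinity>"
    and E2f: "emeasure lebesgue {y. t \<le> tukey z2 y \<and> tukey z1 y < t} < \<infinity>"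
  shows "measure (mechA eps t z1) W \<le> exp eps * measure (mechA eps t z2) W
     + (exp (eps/2) * exp (eps * real t / 2) * enn2real (emeasure lebesgue {y. t \<le> tukey z2 y \<and> tukey z1 y < t})
       + exp (eps * real t / 2) * enn2real (emeasure lebesgue {y. t \<le> tukey z1 y \<and> tukey z2 y < t}))
       / enn2real (\<integral>\<^sup>+y. mechf eps t z1 y \<partial>lebesgue)"
proof -
  define e where "e = exp (eps/2)"
  define c where "c = exp (eps * real t / 2)"
  define V1 where "V1 = emeasure lebesgue {y. t \<le> tukey z1 y \<and> tukey z2 y < t}"
  define V2 where "V2 = emeasure lebesgue {y. t \<le> tukey z2 y \<and> tukey z1 y < t}"
  define Z1 where "Z1 = (\<integral>\<^sup>+y. mechf eps t z1 y \<partial>lebesgue)"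
  define Z2 where "Z2 = (\<integral>\<^sup>+y. mechf eps t z2 y \<partial>lebesgue)"
  define I1 where "I1 = (\<integral>\<^sup>+y. mechf eps t z1 y * indicator W y \<partial>lebesgue)"
  define I2 where "I2 = (\<integral>\<^sup>+y. mechf eps t z2 y * indicator W y \<partial>lebesgue)"
  have I2Z2: "I2 \<le> Z2" unfolding I2_def Z2_def by (rule intW_le)
  have Z1t: "Z1 < top" "Z2 < top" using Z1f Z2f Z1_def Z2_def by auto
  have I2t: "I2 < top" using I2Z2 Z1t by auto
  have Vt: "V1 < top" "V2 < top" using E1f E2f V1_def V2_def by auto
  have a1: "I1 \<le> ennreal e * I2 + ennreal c * V1"
    unfolding I1_def I2_def e_def c_def V1_def by (rule intW[OF cl eps W])
  have a2: "Z2 \<le> ennreal e * Z1 + ennreal c * V2"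
    using intW[OF close_sym[OF cl] eps, of UNIV t] unfolding Z1_def Z2_def e_def c_def V2_def by simp
  have r1: "enn2real I1 \<le> e * enn2real I2 + c * enn2real V1"
    by (rule ennreal_ineq[OF a1 I2t Vt(1)]) (auto simp: e_def c_def)
  have r2: "enn2real Z2 \<le> e * enn2real Z1 + c * enn2real V2"
    by (rule ennreal_ineq[OF a2 Z1t(1) Vt(2)]) (auto simp: e_def c_def)
  have r3: "enn2real I2 \<le> enn2real Z2" using I2Z2 Z1t by (intro enn2real_mono) auto
  have p1: "enn2real Z1 > 0" using Z1t Z1p Z1_def by (simp add: enn2real_positive_iff)
  have p2: "enn2real Z2 > 0" using Z1t Z2p Z2_def by (simp add: enn2real_positive_iff)
  have key: "enn2real I1 / enn2real Z1 \<le> e*e*(enn2real I2 / enn2real Z2)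
      + (e * (c * enn2real V2) + c * enn2real V1) / enn2real Z1"
    by (rule real_key[OF r1 r2 _ r3 p1 p2]) (auto simp: e_def c_def)
  have ee: "e * e = exp eps" unfolding e_def by (simp add: exp_add[symmetric])
  have m1: "measure (mechA eps t z1) W = enn2real I1 / enn2real Z1"
    unfolding I1_def Z1_def by (rule measure_mechA[OF W Z1f Z1p])
  have m2: "measure (mechA eps t z2) W = enn2real I2 / enn2real Z2"
    unfolding I2_def Z2_def by (rule measure_mechA[OF W Z2f Z2p])
  show ?thesis using key unfolding m1 m2 ee
    by (simp add: e_def c_def V1_def V2_def Z1_def mult.assoc)
qed


lemma err_bound:
  fixes q1 q2 a bb Zr c G e eps delta :: real
  assumes "0 \<le> q1" "q1 \<le> a" "0 \<le> q2" "q2 \<le> a" "bb > 0" "Zr \<ge> c*G*bb" "c > 0" "G > 0"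
    and R: "a / bb * inverse G \<le> delta" and "eps \<ge> 0" and e: "e = exp (eps/2)"
  shows "(e*c*q2 + c*q1)/Zr \<le> 4*exp eps*delta"
proof -
  have e0: "e > 0" using e by simp
  have a0: "a \<ge> 0" using assms by linarith
  have d0: "delta \<ge> 0" using R a0 assms by (meson order.trans divide_nonneg_pos mult_nonneg_nonneg inverse_nonnegative_iff_nonnegative less_imp_le)
  have Zp: "Zr > 0" using assms by (smt (verit) mult_pos_pos)
  have num: "e*c*q2 + c*q1 \<le> (e+1)*c*a"
  proof -
    have "e*c*q2 \<le> e*c*a" using assms e0 by (intro mult_left_mono) auto
    moreover have "c*q1 \<le> c*a" using assms by (intro mult_left_mono) auto
    ultimately show ?thesis by (simp add: algebra_simps)
  qed
  have "(e*c*q2 + c*q1)/Zr \<le> (e+1)*c*a/Zr" using num Zp by (intro divide_right_mono) auto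
  also have "\<dots> \<le> (e+1)*c*a/(c*G*bb)"
  proof (rule divide_left_mono)
    show "0 \<le> (e+1)*c*a" using assms e0 a0 by auto
    show "c*G*bb \<le> Zr" using assms by simp
    show "0 < Zr * (c*G*bb)" using assms Zp by (intro mult_pos_pos) auto
  qed
  also have "\<dots> = (e+1) * (a / bb * inverse G)" using assms by (simp add: field_simps)
  also have "\<dots> \<le> (e+1) * delta" using R e0 by (intro mult_left_mono) auto
  also have "\<dots> \<le> 4*exp eps*delta"
  proof -
    have "e \<le> exp eps" using e assms by simp
    moreover have "1 \<le> exp eps" using assms by simp
    ultimately have "e + 1 \<le> 4 * exp eps" by linarith
    then show ?thesis using d0 by (intro mult_right_mono) auto
  qed
  finally show ?thesis .
qed

lemma Z_upper:
  "(\<integral>\<^sup>+y. mechf eps t z y \<partial>lebesgue) \<le> ennreal (exp (\<bar>eps\<bar> * real (size z) / 2)) * Vol (int t) z"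
proof -
  have "(\<integral>\<^sup>+y. mechf eps t z y \<partial>lebesgue) \<le>
     (\<integral>\<^sup>+y. ennreal (exp (\<bar>eps\<bar> * real (size z) / 2)) * indicator {y. int t \<le> int (tukey z y)} y \<partial>lebesgue)"
  proof (rule nn_integral_mono)
    fix y
    have "eps * real (tukey z y) \<le> \<bar>eps\<bar> * real (size z)"
    proof -
      have "eps * real (tukey z y) \<le> \<bar>eps\<bar> * real (tukey z y)" by (intro mult_right_mono) auto
      also have "\<dots> \<le> \<bar>eps\<bar> * real (size z)" using tukey_le_size[of z y] by (intro mult_left_mono) auto
      finally show ?thesis .
    qed
    then show "mechf eps t z y \<le> ennreal (exp (\<bar>eps\<bar> * real (size z) / 2)) * indicator {y. int t \<le> int (tukey z y)} y"
      by (auto simp: mechf_simp indicator_def)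
  qed
  also have "\<dots> = ennreal (exp (\<bar>eps\<bar> * real (size z) / 2)) * Vol (int t) z"
    unfolding Vol_def by (rule nn_integral_cmult_indicator) (rule tukey_sets)
  finally show ?thesis .
qed

lemma Z_lower:
  assumes cl: "close (k+1) D z" and eps: "eps \<ge> 0"
  shows "ennreal (exp (eps * real (t + g) / 2)) * Vol (int t + int k + int g + 1) D \<le> (\<integral>\<^sup>+y. mechf eps t z y \<partial>lebesgue)"
proof -
  have "ennreal (exp (eps * real (t + g) / 2)) * Vol (int t + int k + int g + 1) D =
     (\<integral>\<^sup>+y. ennreal (exp (eps * real (t + g) / 2)) * indicator {y. int t + int k + int g + 1 \<le> int (tukey D y)} y \<partial>lebesgue)"
    unfolding Vol_def by (rule nn_integral_cmult_indicator[symmetric]) (rule tukey_sets)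
  also have "\<dots> \<le> (\<integral>\<^sup>+y. mechf eps t z y \<partial>lebesgue)"
  proof (rule nn_integral_mono)
    fix y
    show "ennreal (exp (eps * real (t + g) / 2)) * indicator {y. int t + int k + int g + 1 \<le> int (tukey D y)} y \<le> mechf eps t z y"
    proof (cases "int t + int k + int g + 1 \<le> int (tukey D y)")
      case True
      have "tukey D y \<le> tukey z y + (k+1)" using cl unfolding close_def by auto
      then have tz: "t + g \<le> tukey z y" using True by linarith
      then have "exp (eps * real (t + g) / 2) \<le> exp (eps * real (tukey z y) / 2)"
        using eps by (auto intro!: mult_left_mono divide_right_mono)
      then show ?thesis using True tz by (auto simp: mechf_simp indicator_def)
    qed (auto simp: indicator_def)
  qed
  finally show ?thesis .
qed

lemma zi_facts:
  fixes D z :: "'n::finite db"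
  assumes cl: "close (k+1) D z" and eps: "eps \<ge> 0"
    and A: "Vol (int t - int k - 1) D < \<infinity>" and B: "Vol (int t + int k + int g + 1) D > 0"
  shows "(\<integral>\<^sup>+y. mechf eps t z y \<partial>lebesgue) < \<infinity>"
    and "(\<integral>\<^sup>+y. mechf eps t z y \<partial>lebesgue) > 0"
    and "exp (eps * real (t + g) / 2) * enn2real (Vol (int t + int k + int g + 1) D)
         \<le> enn2real (\<integral>\<^sup>+y. mechf eps t z y \<partial>lebesgue)"
    and "Vol (int t) z \<le> Vol (int t - int k - 1) D"
proof -
  have Vt: "Vol (int t) z \<le> Vol (int t - int k - 1) D"
    using Vol_close[OF close_sym[OF cl], of "int t"] by (simp add: algebra_simps)
  then show "Vol (int t) z \<le> Vol (int t - int k - 1) D" .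
  have "ennreal (exp (\<bar>eps\<bar> * real (size z) / 2)) * Vol (int t) z < \<infinity>"
    using Vt A by (simp add: ennreal_mult_less_top) (meson le_less_trans)
  then show Zf: "(\<integral>\<^sup>+y. mechf eps t z y \<partial>lebesgue) < \<infinity>"
    using Z_upper[of eps t z] by (meson le_less_trans)
  have L: "ennreal (exp (eps * real (t + g) / 2)) * Vol (int t + int k + int g + 1) D \<le> (\<integral>\<^sup>+y. mechf eps t z y \<partial>lebesgue)"
    by (rule Z_lower[OF cl eps])
  have "ennreal (exp (eps * real (t + g) / 2)) * Vol (int t + int k + int g + 1) D > 0"
    using B by (simp add: ennreal_zero_less_mult_iff)
  then show "(\<integral>\<^sup>+y. mechf eps t z y \<partial>lebesgue) > 0" using L by (meson less_le_trans)
  have "enn2real (ennreal (exp (eps * real (t + g) / 2)) * Vol (int t + int k + int g + 1) D)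
     \<le> enn2real (\<integral>\<^sup>+y. mechf eps t z y \<partial>lebesgue)"
    using L Zf by (intro enn2real_mono) auto
  then show "exp (eps * real (t + g) / 2) * enn2real (Vol (int t + int k + int g + 1) D)
         \<le> enn2real (\<integral>\<^sup>+y. mechf eps t z y \<partial>lebesgue)"
    by (simp add: enn2real_mult)
qed

lemma E_bound:
  "emeasure lebesgue {y. t \<le> tukey z1 y \<and> tukey z2 y < t} \<le> Vol (int t) z1"
  unfolding Vol_def by (rule emeasure_mono) (auto intro: tukey_sets)


lemma part2:
  fixes D z :: "'n::finite db"
  assumes eps: "eps > 0" and d: "delta > 0" and le: "int (dH D z) \<le> Mfun eps delta t D"
  shows "safe eps (4 * exp eps * delta) t z"
proof -
  have M0: "Mfun eps delta t D \<ge> 0" using le by linarith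
  define k where "k = nat (Mfun eps delta t D)"
  have Mk: "Mcond eps delta t D k" "k < t" using Mfun_pos[OF M0] k_def by auto
  have nk: "dH D z \<le> k" using le k_def M0 by linarith
  have clz: "close (k+1) D z" using close_mono[OF dH_close, of D z "k+1"] nk by simp
  from Mk(1) obtain g :: nat where g: "g > 0" and A: "Vol (int t - int k - 1) D < \<infinity>"
    and B: "Vol (int t + int k + int g + 1) D > 0"
    and R: "enn2real (Vol (int t - int k - 1) D) / enn2real (Vol (int t + int k + int g + 1) D)
        * exp (- eps * real g / 2) \<le> delta"
    unfolding Mcond_def by blast
  define a where "a = Vol (int t - int k - 1) D"
  define b where "b = Vol (int t + int k + int g + 1) D"
  have ba: "b \<le> a" unfolding a_def b_def by (rule Vol_mono) simp
  have at: "a < top" using A a_def by simp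
  have bt: "b < top" using ba at by auto
  have bpos: "enn2real b > 0" using bt B b_def by (simp add: enn2real_positive_iff)
  define c where "c = exp (eps * real t / 2)"
  define G where "G = exp (eps * real g / 2)"
  have cG: "exp (eps * real (t + g) / 2) = c * G"
    unfolding c_def G_def by (simp add: exp_add[symmetric] add_divide_distrib distrib_left)
  have R': "enn2real a / enn2real b * inverse G \<le> delta"
    using R unfolding a_def[symmetric] b_def[symmetric] G_def by (simp add: exp_minus)
  have epsn: "eps \<ge> 0" using eps by simp
  note zf = zi_facts[OF _ epsn A B, folded a_def b_def]
  have Ebd: "enn2real (emeasure lebesgue {y. t \<le> tukey z1 y \<and> tukey z2 y < t}) \<le> enn2real a"
    "emeasure lebesgue {y. t \<le> tukey z1 y \<and> tukey z2 y < t} < \<infinity>"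
    if "close (k+1) D z1" for z1 z2 :: "'n db"
  proof -
    have "emeasure lebesgue {y. t \<le> tukey z1 y \<and> tukey z2 y < t} \<le> a"
      using E_bound[of t z1 z2] zf(4)[OF that] by (meson order.trans)
    then show "enn2real (emeasure lebesgue {y. t \<le> tukey z1 y \<and> tukey z2 y < t}) \<le> enn2real a"
      "emeasure lebesgue {y. t \<le> tukey z1 y \<and> tukey z2 y < t} < \<infinity>"
      using at by (auto intro: enn2real_mono le_less_trans)
  qed
  have onedir: "measure (mechA eps t z1) W \<le> exp eps * measure (mechA eps t z2) W + 4 * exp eps * delta"
    if c1: "close (k+1) D z1" and c2: "close (k+1) D z2" and cl: "close 1 z1 z2"
      and W: "W \<in> sets lebesgue" for z1 z2 :: "'n db" and W
  proof -
    have h: "measure (mechA eps t z1) W \<le> exp eps * measure (mechA eps t z2) W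
     + (exp (eps/2) * c * enn2real (emeasure lebesgue {y. t \<le> tukey z2 y \<and> tukey z1 y < t})
       + c * enn2real (emeasure lebesgue {y. t \<le> tukey z1 y \<and> tukey z2 y < t}))
       / enn2real (\<integral>\<^sup>+y. mechf eps t z1 y \<partial>lebesgue)"
      unfolding c_def
      by (rule half[OF cl epsn W zf(1)[OF c1] zf(2)[OF c1] zf(1)[OF c2] zf(2)[OF c2] Ebd(2)[OF c1] Ebd(2)[OF c2]])
    have "(exp (eps/2) * c * enn2real (emeasure lebesgue {y. t \<le> tukey z2 y \<and> tukey z1 y < t})
       + c * enn2real (emeasure lebesgue {y. t \<le> tukey z1 y \<and> tukey z2 y < t}))
       / enn2real (\<integral>\<^sup>+y. mechf eps t z1 y \<partial>lebesgue) \<le> 4 * exp eps * delta"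
    proof (rule err_bound[OF _ Ebd(1)[OF c1] _ Ebd(1)[OF c2] bpos _ _ _ R' epsn refl])
      show "c * G * enn2real b \<le> enn2real (\<integral>\<^sup>+y. mechf eps t z1 y \<partial>lebesgue)"
        using zf(3)[OF c1] cG by simp
    qed (auto simp: c_def G_def)
    then show ?thesis using h by linarith
  qed
  show ?thesis unfolding safe_def indist_def
  proof (intro allI impI conjI ballI)
    fix z' assume nz: "nbr z z'"
    have clz': "close (k+1) D z'"
      using close_mono[OF close_trans[OF dH_close nbr_close[OF nz]], where n="k+1"] nk by simp
    show "sets (mechA eps t z) = sets (mechA eps t z')" by (simp add: mechA_def)
    fix W assume "W \<in> sets (mechA eps t z)"
    then have W: "W \<in> sets lebesgue" by (simp add: mechA_def)
    show "measure (mechA eps t z) W \<le> exp eps * measure (mechA eps t z') W + 4 * exp eps * delta"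
      by (rule onedir[OF clz clz' nbr_close[OF nz] W])
    show "measure (mechA eps t z') W \<le> exp eps * measure (mechA eps t z) W + 4 * exp eps * delta"
      by (rule onedir[OF clz' clz close_sym[OF nbr_close[OF nz]] W])
  qed
qed

theorem mainTheorem2:
  fixes eps delta :: real and t :: nat
  assumes "eps > 0" and "delta > 0" and "t > 0"
  shows "(\<forall>D D' :: 'n::finite db. nbr D D' \<longrightarrow>
            \<bar>Mfun eps delta t D - Mfun eps delta t D'\<bar> \<le> 1)
       \<and> (\<forall>D z :: 'n::finite db.
            Vol (int t) z > 0 \<longrightarrow> (\<forall>z'. nbr z z' \<longrightarrow> Vol (int t) z' > 0) \<longrightarrow>
            z \<in> Unsafe eps (4 * exp eps * delta) t \<longrightarrow>
            int (dH D z) > Mfun eps delta t D)"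
proof
  show "\<forall>D D' :: 'n::finite db. nbr D D' \<longrightarrow> \<bar>Mfun eps delta t D - Mfun eps delta t D'\<bar> \<le> 1"
    by (rule part1[OF assms(2)])
  show "\<forall>D z :: 'n::finite db.
            Vol (int t) z > 0 \<longrightarrow> (\<forall>z'. nbr z z' \<longrightarrow> Vol (int t) z' > 0) \<longrightarrow>
            z \<in> Unsafe eps (4 * exp eps * delta) t \<longrightarrow>
            int (dH D z) > Mfun eps delta t D"
  proof (intro allI impI)
    fix D z :: "'n db"
    assume "z \<in> Unsafe eps (4 * exp eps * delta) t"
    then have ns: "\<not> safe eps (4 * exp eps * delta) t z" unfolding Unsafe_def by simp
    show "int (dH D z) > Mfun eps delta t D"
    proof (rule ccontr)
      assume "\<not> int (dH D z) > Mfun eps delta t D"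
      then have "int (dH D z) \<le> Mfun eps delta t D" by simp
      then have "safe eps (4 * exp eps * delta) t z" using part2 assms by blast
      then show False using ns by simp
    qed
  qed
qed

end
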